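(* Let $m \ge 1$ be an integer. Let $(h(n))_{n\ge 1}$ be the non-decreasing sequence of non-negative integers with $h(1)=0$ in which, for each integer $k\ge 0$, the value $k$ appears exactly $mk+1$ times. Let $(a(n))_{n\ge1}$ be the sequence of positive integers defined by $a(1)=1$ and the nested recurrence $$a(n+1) = n - a^{(m)}(n) + a^{(m+1)}(n) \qquad (n\ge 1).$$ Then $a(n) = n - h(n)$ for all $n \ge 1$, and this is the unique sequence satisfying the recurrence with $a(1)=1$.
   Context: For a function $f$ on the positive integers, the iterates are defined by $f^{(0)}(n)=n$ and $f^{(j+1)}(n)=f(f^{(j)}(n))$; thus $a^{(m)}(n)$ denotes $a$ applied $m$ times to $n$. Equivalently, $h(n)=k$ if and only if $T^{\star}_k \le n < T^{\star}_{k+1}$, where $T^{\star}_k = 1 + m\binom{k}{2} + k$ for $k\ge 0$. *)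

theory Defs
  imports Main
begin

text \<open>T m k = 1 + m * binom(k,2) + k: first index at which h takes value k.\<close>
definition Tstar :: "nat \<Rightarrow> nat \<Rightarrow> nat" where
  "Tstar m k = 1 + m * (k choose 2) + k"

definition hseq :: "nat \<Rightarrow> nat \<Rightarrow> nat" where
  "hseq m n = (THE k. Tstar m k \<le> n \<and> n < Tstar m (Suc k))"

definition satisfies_rec :: "nat \<Rightarrow> (nat \<Rightarrow> nat) \<Rightarrow> bool" where
  "satisfies_rec m a \<longleftrightarrow> a 1 = 1 \<and> (\<forall>n\<ge>1. a n \<ge> 1) \<and>
     (\<forall>n\<ge>1. int (a (n + 1)) = int n - int ((a ^^ m) n) + int ((a ^^ (m + 1)) n))"

end

theory Submission
  imports Defs
begin

lemma T_Suc: "Tstar m (Suc k) = Tstar m k + m * k + 1"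
  by (simp add: Tstar_def numeral_2_eq_2 algebra_simps)

lemma T_mono: "k < l \<Longrightarrow> Tstar m k < Tstar m l"
proof (induction l)
  case 0 then show ?case by simp
next
  case (Suc l) then show ?case by (cases "k = l") (auto simp: T_Suc)
qed

lemma T_mono_le: "k \<le> l \<Longrightarrow> Tstar m k \<le> Tstar m l"
  using T_mono by (metis le_eq_less_or_eq)

lemma T_ge: "Tstar m k \<ge> k + 1"
  by (simp add: Tstar_def)

lemma hseq_eq:
  assumes "Tstar m k \<le> n" "n < Tstar m (Suc k)"
  shows "hseq m n = k"
  unfolding hseq_def
proof (rule the_equality)
  show "Tstar m k \<le> n \<and> n < Tstar m (Suc k)" using assms by simp
next
  fix l assume l: "Tstar m l \<le> n \<and> n < Tstar m (Suc l)"
  show "l = k"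
  proof (rule ccontr)
    assume "l \<noteq> k"
    then consider "l < k" | "k < l" by linarith
    then show False
    proof cases
      case 1 then have "Suc l \<le> k" by simp
      then have "Tstar m (Suc l) \<le> Tstar m k" by (rule T_mono_le)
      then show False using l assms by linarith
    next
      case 2 then have "Suc k \<le> l" by simp
      then have "Tstar m (Suc k) \<le> Tstar m l" by (rule T_mono_le)
      then show False using l assms by linarith
    qed
  qed
qed

lemma block_exists: "n \<ge> 1 \<Longrightarrow> \<exists>k. Tstar m k \<le> n \<and> n < Tstar m (Suc k)"
proof (induction n)
  case 0 then show ?case by simp
next
  case (Suc n)
  show ?case
  proof (cases "n = 0")
    case True
    then show ?thesis by (intro exI[of _ 0]) (simp add: Tstar_def)
  next
    case False
    then obtain k where k: "Tstar m k \<le> n" "n < Tstar m (Suc k)" using Suc by auto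
    show ?thesis
    proof (cases "Suc n < Tstar m (Suc k)")
      case True then show ?thesis using k by (intro exI[of _ k]) simp
    next
      case False
      then have "Suc n = Tstar m (Suc k)" using k by simp
      moreover have "Tstar m (Suc k) < Tstar m (Suc (Suc k))" by (rule T_mono) simp
      ultimately show ?thesis by (intro exI[of _ "Suc k"]) simp
    qed
  qed
qed

definition bb :: "nat \<Rightarrow> nat \<Rightarrow> nat" where "bb m n = n - hseq m n"

lemma bb_range: "n \<ge> 1 \<Longrightarrow> 1 \<le> bb m n \<and> bb m n \<le> n"
proof -
  assume "n \<ge> 1"
  then obtain k where k: "Tstar m k \<le> n" "n < Tstar m (Suc k)" using block_exists by blast
  then have "hseq m n = k" by (rule hseq_eq)
  moreover have "Tstar m k \<ge> k + 1" by (rule T_ge)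
  ultimately show ?thesis using k by (simp add: bb_def)
qed

lemma bb_in: "Tstar m k \<le> x \<Longrightarrow> x < Tstar m (Suc k) \<Longrightarrow> bb m x = x - k"
  by (simp add: bb_def hseq_eq)

lemma aux_sub: "x < A + B \<Longrightarrow> 0 < A \<Longrightarrow> x - B < (A::nat)" by arith

lemma invariant:
  assumes k: "Tstar m (Suc k) \<le> Suc n" "Suc n < Tstar m (Suc (Suc k))"
  shows "j \<le> m \<Longrightarrow> Tstar m k + (m - j) * k \<le> (bb m ^^ j) n \<and>
           (bb m ^^ j) n < Tstar m (Suc k) + (m - j) * (Suc k)"
proof (induction j)
  case 0
  then show ?case using k by (simp add: T_Suc algebra_simps)
next
  case (Suc j)
  then have j: "j < m" by simp
  define x where "x = (bb m ^^ j) n"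
  have I: "Tstar m k + (m - j) * k \<le> x" "x < Tstar m (Suc k) + (m - j) * Suc k"
    using Suc x_def by auto
  have mj: "m - j = Suc (m - Suc j)" using j by simp
  have eq: "(bb m ^^ Suc j) n = bb m x" by (simp add: x_def)
  show ?case
  proof (cases "x \<ge> Tstar m (Suc k)")
    case True
    have "(m - j) * Suc k \<le> m * Suc k" by (rule mult_le_mono1) simp
    moreover have "Tstar m (Suc (Suc k)) = Tstar m (Suc k) + m * Suc k + 1" by (rule T_Suc)
    ultimately have "x < Tstar m (Suc (Suc k))" using I(2) by linarith
    then have "bb m x = x - Suc k" using True bb_in by blast
    moreover have "Tstar m (Suc k) - Suc k \<ge> Tstar m k + (m - Suc j) * k"
    proof -
      have "(m - Suc j) * k + k = (m - j) * k" by (simp add: mj)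
      moreover have "(m - j) * k \<le> m * k" by simp
      ultimately show ?thesis using T_Suc[of m k] by linarith
    qed
    moreover have "x - Suc k < Tstar m (Suc k) + (m - Suc j) * Suc k"
    proof -
      have "(m - j) * Suc k = (m - Suc j) * Suc k + Suc k" by (simp only: mj mult_Suc)
      then have "x < (Tstar m (Suc k) + (m - Suc j) * Suc k) + Suc k" using I(2) by (simp only: add.assoc)
      moreover have "0 < Tstar m (Suc k) + (m - Suc j) * Suc k" by (simp add: Tstar_def)
      ultimately show ?thesis by (rule aux_sub)
    qed
    ultimately show ?thesis using True eq by simp
  next
    case False
    have "Tstar m k \<le> x" using I(1) by simp
    then have "bb m x = x - k" using False bb_in by simp
    moreover have "x - k \<ge> Tstar m k + (m - Suc j) * k" using I(1) mj by simp
    moreover have "x - k < Tstar m (Suc k) + (m - Suc j) * Suc k" using False by simp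
    ultimately show ?thesis using eq by simp
  qed
qed

lemma existence:
  assumes "n \<ge> 1"
  shows "int (bb m (n + 1)) = int n - int ((bb m ^^ m) n) + int ((bb m ^^ (m + 1)) n)"
proof -
  obtain K where K: "Tstar m K \<le> Suc n" "Suc n < Tstar m (Suc K)"
    using block_exists[of "Suc n" m] by auto
  have "K \<noteq> 0"
  proof
    assume "K = 0"
    then have "Suc n < 2" using K by (simp add: Tstar_def numeral_2_eq_2)
    then show False using assms by simp
  qed
  then obtain k where kK: "K = Suc k" by (cases K) auto
  have K': "Tstar m (Suc k) \<le> Suc n" "Suc n < Tstar m (Suc (Suc k))" using K kK by auto
  define y where "y = (bb m ^^ m) n"
  have y: "Tstar m k \<le> y" "y < Tstar m (Suc k)"
    using invariant[OF K', of m] y_def by auto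
  have byy: "bb m y = y - k" using y bb_in by blast
  have yk: "y \<ge> k + 1" using y(1) T_ge[where m=m and k=k] by linarith
  have bn: "bb m (n + 1) = n - k" using bb_in[OF K'] by simp
  have nk: "n \<ge> k" using K' T_ge[where m=m and k="Suc k"] by linarith
  have "(bb m ^^ (m + 1)) n = bb m y" by (simp add: y_def)
  then show ?thesis using byy yk bn nk y_def by simp
qed

lemma iter_agree:
  assumes agree: "\<forall>j. 1 \<le> j \<and> j \<le> n \<longrightarrow> a j = bb m j"
  shows "1 \<le> x \<Longrightarrow> x \<le> n \<Longrightarrow> (a ^^ i) x = (bb m ^^ i) x \<and> 1 \<le> (bb m ^^ i) x \<and> (bb m ^^ i) x \<le> n"
proof (induction i)
  case 0 then show ?case by simp
next
  case (Suc i)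
  then have IH: "(a ^^ i) x = (bb m ^^ i) x" "1 \<le> (bb m ^^ i) x" "(bb m ^^ i) x \<le> n" by auto
  then show ?case using agree bb_range[OF IH(2), of m] by auto
qed

lemma uniq:
  assumes rec: "satisfies_rec m a"
  shows "\<forall>j. 1 \<le> j \<and> j \<le> n \<longrightarrow> a j = bb m j"
proof (induction n)
  case 0 then show ?case by simp
next
  case (Suc n)
  have "a (Suc n) = bb m (Suc n)"
  proof (cases "n = 0")
    case True
    have "hseq m 1 = 0" by (rule hseq_eq) (auto simp: Tstar_def)
    then show ?thesis using rec True by (simp add: satisfies_rec_def bb_def)
  next
    case False
    then have n1: "n \<ge> 1" by simp
    have "int (a (n + 1)) = int n - int ((a ^^ m) n) + int ((a ^^ (m + 1)) n)"
      using rec n1 by (simp add: satisfies_rec_def)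
    also have "\<dots> = int n - int ((bb m ^^ m) n) + int ((bb m ^^ (m + 1)) n)"
      using iter_agree[OF Suc, of n m] iter_agree[OF Suc, of n "m+1"] n1 by simp
    also have "\<dots> = int (bb m (n + 1))" using existence[OF n1] by simp
    finally show ?thesis by simp
  qed
  then show ?case using Suc by (auto simp: le_Suc_eq)
qed

theorem mainTheorem1:
  fixes m :: nat
  assumes "m \<ge> 1"
  shows "satisfies_rec m (\<lambda>n. n - hseq m n)
     \<and> (\<forall>a. satisfies_rec m a \<longrightarrow> (\<forall>n\<ge>1. a n = n - hseq m n))"
proof -
  have f: "(\<lambda>n. n - hseq m n) = bb m" by (simp add: bb_def fun_eq_iff)
  have h1: "hseq m 1 = 0" by (rule hseq_eq) (auto simp: Tstar_def)
  have "satisfies_rec m (bb m)"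
    unfolding satisfies_rec_def using existence bb_range h1 by (auto simp: bb_def)
  then have A: "satisfies_rec m (\<lambda>n. n - hseq m n)" using f by simp
  have B: "\<forall>a. satisfies_rec m a \<longrightarrow> (\<forall>n\<ge>1. a n = n - hseq m n)"
    using uniq unfolding bb_def by blast
  show ?thesis using A B by blast
qed

end
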